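(* Let $\theta$ be a real number with $0<\theta<\tfrac{3\pi}{2}$. In the Cartesian plane let $O=(0,0)$, let $OA$ be the positive $x$-axis, and let $OB$ be the ray from $O$ making polar angle $\theta$ with $OA$, i.e. $OB=\{t(\cos\theta,\sin\theta): t\ge 0\}$. Let $l$ be the line $y=1$. Consider points $C, D, E$ satisfying: (i) $C=(c,1)\in l$ with $c>0$; (ii) $D$ lies on the ray $OB$; (iii) $|CD|=2$ and $E$ is the midpoint of the segment $CD$; (iv) the line $OE$ is perpendicular to the line $CD$, i.e. $E\cdot(D-C)=0$; (v) $E$ lies strictly on the counterclockwise side of the line $OC$, i.e. $\det(C,E)=c\,e_2-e_1>0$ where $E=(e_1,e_2)$. Then such points $C,D,E$ exist, and for any such points the ray $OC$ has polar angle $\theta/3$ and the ray $OE$ has polar angle $2\theta/3$; that is, the rays $OC$ and $OE$ trisect the angle $\angle AOB$.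
   Context: This formalizes Scudder's carpenter's-square (T-square) trisection: the tool is a T whose top is a segment $CD$ of length $2$ and whose stem is the perpendicular to $CD$ through its midpoint $E$; the tool is placed so that the stem passes through the vertex $O$, the endpoint $C$ lies on the line parallel to $OA$ at distance $1$, and the endpoint $D$ lies on $OB$. The polar angle of a nonzero point is its argument measured counterclockwise from the positive $x$-axis. *)

theory Defs
  imports "HOL-Analysis.Analysis"
begin

definition polar_angle :: "real \<times> real \<Rightarrow> real" where
  "polar_angle P = (let a = Arg (Complex (fst P) (snd P)) in if a < 0 then a + 2 * pi else a)"

end

theory Submission
  imports Defs
begin

lemma polar_rcis:
  assumes "\<rho> > 0" "0 \<le> a" "a \<le> pi"
  shows "polar_angle (\<rho> * cos a, \<rho> * sin a) = a"
proof -
  have eq: "Complex (\<rho> * cos a) (\<rho> * sin a) = rcis \<rho> a"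
    by (simp add: complex_eq_iff rcis_def)
  have "Arg (Complex (\<rho> * cos a) (\<rho> * sin a)) = a"
    proof (rule Arg_unique'[of \<rho>])
      have "-pi < a" using assms pi_gt_zero by linarith
    then show "a \<in> {-pi<..pi}" using assms by auto
  qed (use assms eq in auto)
  then show ?thesis using assms by (simp add: polar_angle_def Let_def)
qed

lemma sin_treble: "sin (3 * (x::real)) = 3 * sin x - 4 * sin x ^ 3"
proof -
  have "sin (3*x) = sin (2*x + x)" by (simp add: algebra_simps)
  also have "\<dots> = 2 * sin x * cos x * cos x + (cos x ^ 2 - sin x ^ 2) * sin x"
    by (simp only: sin_add sin_double cos_double)
  also have "\<dots> = 2 * sin x * (cos x)^2 + ((cos x)^2 - sin x ^ 2) * sin x"
    by (simp add: algebra_simps power2_eq_square)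
  also have "\<dots> = 3 * sin x - 4 * sin x ^ 3"
    unfolding cos_squared_eq by (simp add: algebra_simps power2_eq_square power3_eq_cube)
  finally show ?thesis .
qed

lemma key:
  fixes c :: real
  assumes c: "c > 0"
  defines "\<beta> \<equiv> pi/2 - arctan c" and "r \<equiv> sqrt (c^2 + 1)"
  shows "0 < \<beta>" "\<beta> < pi/2" "r > 0" "c = r * cos \<beta>" "1 = r * sin \<beta>"
    "(c^3 - 3*c)/(c^2+1) = r * cos (3*\<beta>)" "(3*c^2 - 1)/(c^2+1) = r * sin (3*\<beta>)"
    "(c^3 - c)/(c^2+1) = c * cos (2*\<beta>)" "2*c^2/(c^2+1) = c * sin (2*\<beta>)"
proof -
  have a: "0 < arctan c" "arctan c < pi/2" using c arctan_bounded[of c] by (auto simp: arctan_less_zero_iff)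
  show "0 < \<beta>" "\<beta> < pi/2" using a by (auto simp: \<beta>_def)
  show rp: "r > 0" unfolding r_def by (simp add: add_pos_nonneg add_nonneg_pos)
  have r2: "r^2 = c^2+1" unfolding r_def by simp
  have d: "c^2 + 1 \<noteq> 0" "1 + c^2 \<noteq> 0" using zero_le_power2[of c] by linarith+
  have cb: "cos \<beta> = c / r" unfolding \<beta>_def r_def by (simp add: cos_diff sin_arctan add.commute)
  have sb: "sin \<beta> = 1 / r" unfolding \<beta>_def r_def by (simp add: sin_diff cos_arctan add.commute)
  show "c = r * cos \<beta>" "1 = r * sin \<beta>" using rp cb sb by auto
  show "(c^3 - 3*c)/(c^2+1) = r * cos (3*\<beta>)"
  proof -
    have "r * cos (3*\<beta>) = 4 * c^3 / r^2 - 3 * c" unfolding cos_treble_cos cb using rp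
      by (simp add: field_simps power3_eq_cube power2_eq_square)
    then show ?thesis unfolding r2 using d by (simp add: field_simps power3_eq_cube power2_eq_square)
  qed
  show "(3*c^2 - 1)/(c^2+1) = r * sin (3*\<beta>)"
  proof -
    have "r * sin (3*\<beta>) = 3 - 4 / r^2" unfolding sin_treble sb using rp
      by (simp add: field_simps power3_eq_cube power2_eq_square)
    then show ?thesis unfolding r2 using d by (simp add: field_simps power3_eq_cube power2_eq_square)
  qed
  show "(c^3 - c)/(c^2+1) = c * cos (2*\<beta>)"
  proof -
    have "cos (2*\<beta>) = (c^2-1)/(c^2+1)" by (simp add: cos_double cb sb power_divide r2 diff_divide_distrib)
    then show ?thesis by (simp add: power3_eq_cube power2_eq_square algebra_simps)
  qed
  show "2*c^2/(c^2+1) = c * sin (2*\<beta>)"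
  proof -
    have "sin (2*\<beta>) = 2*c/(c^2+1)" using rp r2 by (simp add: sin_double cb sb power2_eq_square)
    then show ?thesis by (simp add: power2_eq_square algebra_simps)
  qed
qed

lemma dist_eq: "dist ((a::real),(b::real)) (c,d) = sqrt ((a-c)^2 + (b-d)^2)"
  by (simp add: dist_Pair_Pair dist_real_def)

lemma uniq:
  fixes c x y :: real
  assumes c: "c > 0" and n: "x^2 + y^2 = c^2 + 1" and dd: "(c-x)^2 + (1-y)^2 = 4"
    and cr: "c*y - x > 0"
  shows "x = (c^3 - 3*c)/(c^2+1)" "y = (3*c^2 - 1)/(c^2+1)"
proof -
  have d: "c^2 + 1 > 0" using zero_le_power2[of c] by linarith
  have l: "y = c^2 - 1 - c*x" using n dd by (simp add: power2_eq_square algebra_simps)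
  have q: "(x - c) * ((c^2+1) * x - (c^3 - 3*c)) = 0"
    using n unfolding l by (simp add: power2_eq_square power3_eq_cube algebra_simps)
  have "x \<noteq> c"
  proof
    assume "x = c" then have "y = -1" using l by (simp add: power2_eq_square)
    then show False using cr \<open>x = c\<close> c by simp
  qed
  then have "(c^2+1) * x = c^3 - 3*c" using q by simp
  then show x: "x = (c^3 - 3*c)/(c^2+1)" using d by (simp add: field_simps)
  show "y = (3*c^2 - 1)/(c^2+1)" unfolding l x using d
    by (simp add: field_simps power3_eq_cube power2_eq_square)
qed

lemma exist_conds:
  fixes c :: real
  assumes c: "c > 0"
  defines "x \<equiv> (c^3 - 3*c)/(c^2+1)" and "y \<equiv> (3*c^2 - 1)/(c^2+1)"
  shows "x^2 + y^2 = c^2 + 1" "(c-x)^2 + (1-y)^2 = 4" "c*y - x > 0"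
proof -
  have d: "c^2 + 1 > 0" using zero_le_power2[of c] by linarith
  have e1: "c - x = 4*c/(c^2+1)" unfolding x_def using d by (simp add: field_simps power3_eq_cube power2_eq_square)
  have e2: "1 - y = (2 - 2*c^2)/(c^2+1)" unfolding y_def using d by (simp add: field_simps)
  have "c*y - x = (c*(3*c^2 - 1) - (c^3 - 3*c))/(c^2+1)" unfolding x_def y_def
    by (simp add: diff_divide_distrib right_diff_distrib add_divide_distrib)
  also have "c*(3*c^2 - 1) - (c^3 - 3*c) = 2*c*(c^2+1)"
    by (simp add: power3_eq_cube power2_eq_square algebra_simps)
  finally have "c*y - x = (2*c*(c^2+1))/(c^2+1)" .
  then have e3: "c*y - x = 2*c" using d by simp
  show "c*y - x > 0" using e3 c by simp
  have "(c-x)^2 + (1-y)^2 = ((4*c)^2 + (2-2*c^2)^2)/(c^2+1)^2"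
    unfolding e1 e2 by (simp add: power_divide add_divide_distrib)
  also have "(4*c)^2 + (2-2*c^2)^2 = 4*(c^2+1)^2" by (simp add: power2_eq_square algebra_simps)
  finally show "(c-x)^2 + (1-y)^2 = 4" using d by simp
  have "x^2 + y^2 = ((c^3 - 3*c)^2 + (3*c^2 - 1)^2)/(c^2+1)^2"
    unfolding x_def y_def by (simp add: power_divide add_divide_distrib)
  also have "(c^3 - 3*c)^2 + (3*c^2 - 1)^2 = (c^2+1)*(c^2+1)^2"
    by (simp add: power2_eq_square power3_eq_cube algebra_simps)
  finally show "x^2 + y^2 = c^2 + 1" using d by simp
qed

lemma mid:
  fixes c :: real
  assumes c: "c > 0"
  shows "(c + (c^3 - 3*c)/(c^2+1))/2 = (c^3 - c)/(c^2+1)"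
        "(1 + (3*c^2 - 1)/(c^2+1))/2 = 2*c^2/(c^2+1)"
proof -
  have d: "c^2 + 1 > 0" using zero_le_power2[of c] by linarith
  show "(c + (c^3 - 3*c)/(c^2+1))/2 = (c^3 - c)/(c^2+1)" using d
    by (simp add: field_simps power3_eq_cube power2_eq_square)
  show "(1 + (3*c^2 - 1)/(c^2+1))/2 = 2*c^2/(c^2+1)" using d
    by (simp add: field_simps power2_eq_square)
qed

theorem mainTheorem1:
  fixes \<theta> :: real
  assumes "0 < \<theta>" and "\<theta> < 3 * pi / 2"
  shows "(\<exists>C D E :: real \<times> real.
            snd C = 1 \<and> fst C > 0 \<and>
            (\<exists>t\<ge>0. D = (t * cos \<theta>, t * sin \<theta>)) \<and>
            dist C D = 2 \<and> E = (1/2) *\<^sub>R (C + D) \<and>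
            fst E * (fst D - fst C) + snd E * (snd D - snd C) = 0 \<and>
            fst C * snd E - snd C * fst E > 0)
       \<and> (\<forall>C D E :: real \<times> real.
            snd C = 1 \<and> fst C > 0 \<and>
            (\<exists>t\<ge>0. D = (t * cos \<theta>, t * sin \<theta>)) \<and>
            dist C D = 2 \<and> E = (1/2) *\<^sub>R (C + D) \<and>
            fst E * (fst D - fst C) + snd E * (snd D - snd C) = 0 \<and>
            fst C * snd E - snd C * fst E > 0
            \<longrightarrow> polar_angle C = \<theta> / 3 \<and> polar_angle E = 2 * \<theta> / 3)"
proof
  define b where "b = \<theta> / 3"
  have b0: "0 < b" "b < pi/2" using assms by (auto simp: b_def)
  define c where "c = tan (pi/2 - b)"
  have c0: "c > 0" unfolding c_def using b0 by (intro tan_gt_zero) auto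
  have ac: "pi/2 - arctan c = b" unfolding c_def using b0 by (subst arctan_tan) auto
  define r where "r = sqrt (c^2 + 1)"
  define x where "x = (c^3 - 3*c)/(c^2+1)"
  define y where "y = (3*c^2 - 1)/(c^2+1)"
  have k: "r > 0" "x = r * cos \<theta>" "y = r * sin \<theta>"
    using key[OF c0] unfolding ac r_def[symmetric] x_def y_def b_def by auto
  have ec: "x^2 + y^2 = c^2 + 1" "(c-x)^2 + (1-y)^2 = 4" "c*y - x > 0"
    using exist_conds[OF c0] unfolding x_def y_def by auto
  let ?C = "(c, 1::real)" and ?D = "(x, y)"
  let ?E = "(1/2::real) *\<^sub>R (?C + ?D)"
  show "\<exists>C D E :: real \<times> real.
            snd C = 1 \<and> fst C > 0 \<and>
            (\<exists>t\<ge>0. D = (t * cos \<theta>, t * sin \<theta>)) \<and>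
            dist C D = 2 \<and> E = (1/2) *\<^sub>R (C + D) \<and>
            fst E * (fst D - fst C) + snd E * (snd D - snd C) = 0 \<and>
            fst C * snd E - snd C * fst E > 0"
  proof (rule exI[of _ ?C], rule exI[of _ ?D], rule exI[of _ ?E], intro conjI)
    show "snd ?C = 1" "fst ?C > 0" using c0 by auto
    show "\<exists>t\<ge>0. ?D = (t * cos \<theta>, t * sin \<theta>)" using k by (intro exI[of _ r]) auto
    show "dist ?C ?D = 2" using ec by (simp add: dist_eq)
    show "?E = ?E" ..
    have "fst ?E * (fst ?D - fst ?C) + snd ?E * (snd ?D - snd ?C) = (x^2 + y^2 - (c^2 + 1))/2"
      by (simp add: power2_eq_square field_simps)
    then show "fst ?E * (fst ?D - fst ?C) + snd ?E * (snd ?D - snd ?C) = 0" using ec by simp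
    have eq: "fst ?C * snd ?E - snd ?C * fst ?E = (c*y - x)/2" by (simp add: field_simps)
    show "fst ?C * snd ?E - snd ?C * fst ?E > 0" unfolding eq using ec(3) by simp
  qed
next
  show "\<forall>C D E :: real \<times> real.
            snd C = 1 \<and> fst C > 0 \<and>
            (\<exists>t\<ge>0. D = (t * cos \<theta>, t * sin \<theta>)) \<and>
            dist C D = 2 \<and> E = (1/2) *\<^sub>R (C + D) \<and>
            fst E * (fst D - fst C) + snd E * (snd D - snd C) = 0 \<and>
            fst C * snd E - snd C * fst E > 0
            \<longrightarrow> polar_angle C = \<theta> / 3 \<and> polar_angle E = 2 * \<theta> / 3"
  proof (intro allI impI, elim conjE exE)
    fix C D E :: "real \<times> real" and t :: real
    assume h1: "snd C = 1" and h2: "fst C > 0" and t0: "t \<ge> 0"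
      and hD: "D = (t * cos \<theta>, t * sin \<theta>)" and hd: "dist C D = 2"
      and hE: "E = (1/2) *\<^sub>R (C + D)"
      and ho: "fst E * (fst D - fst C) + snd E * (snd D - snd C) = 0"
      and hc: "fst C * snd E - snd C * fst E > 0"
    define c where "c = fst C"
    define x where "x = fst D"
    define y where "y = snd D"
    have C: "C = (c, 1)" using h1 unfolding c_def by (metis prod.collapse)
    have D: "D = (x, y)" unfolding x_def y_def by simp
    have c0: "c > 0" using h2 c_def by simp
    have E: "E = ((c + x)/2, (1 + y)/2)" using hE C D by simp
    have n: "x^2 + y^2 = c^2 + 1"
    proof -
      have "((c + x)/2) * (x - c) + ((1 + y)/2) * (y - 1) = 0" using ho C D E by simp
      then show ?thesis by (simp add: power2_eq_square field_simps)
    qed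
    have dd: "(c-x)^2 + (1-y)^2 = 4"
    proof -
      have "sqrt ((c-x)^2 + (1-y)^2) = 2" using hd C D by (simp add: dist_eq)
      then have "(sqrt ((c-x)^2 + (1-y)^2))^2 = 2^2" by simp
      then show ?thesis by simp
    qed
    have cr: "c*y - x > 0"
    proof -
      have "c * ((1 + y)/2) - (c + x)/2 > 0" using hc C E by simp
      then show ?thesis by (simp add: algebra_simps)
    qed
    note u = uniq[OF c0 n dd cr]
    define \<beta> where "\<beta> = pi/2 - arctan c"
    define r where "r = sqrt (c^2 + 1)"
    note kk = key[OF c0, folded \<beta>_def r_def]
    have r2: "r^2 = c^2 + 1" unfolding r_def by simp
    have xr: "x = r * cos (3*\<beta>)" "y = r * sin (3*\<beta>)" using u kk by auto
    have xt: "x = t * cos \<theta>" "y = t * sin \<theta>" using hD D by auto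
    have "t^2 = r^2"
    proof -
      have "x^2 + y^2 = t^2 * ((sin \<theta>)^2 + (cos \<theta>)^2)" unfolding xt
        by (simp only: power_mult_distrib) algebra
      then have "t^2 = x^2 + y^2" by simp
      then show ?thesis using n r2 by simp
    qed
    then have tr: "t = r" using t0 kk(3) by (simp add: power2_eq_iff_nonneg)
    have cs: "cos \<theta> = cos (3*\<beta>)" "sin \<theta> = sin (3*\<beta>)"
      using xr xt tr kk(3) by auto
    have "cos (\<theta> - 3*\<beta>) = 1"
      unfolding cos_diff cs[symmetric] using sin_cos_squared_add[of \<theta>] by (simp add: power2_eq_square)
    then obtain m :: int where m: "\<theta> - 3*\<beta> = m * 2 * pi" by (auto simp: cos_one_2pi_int)
    have "\<theta> - 3*\<beta> < 3*pi/2" "\<theta> - 3*\<beta> > -(3*pi/2)" using assms kk(1,2) by auto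
    then have "m * 2 * pi < 3*pi/2" "m * 2 * pi > -(3*pi/2)" using m by auto
    then have "(real_of_int m * 4 - 3) * pi < 0" "(real_of_int m * 4 + 3) * pi > 0"
      by (simp_all add: algebra_simps)
    then have "real_of_int m * 4 - 3 < 0" "real_of_int m * 4 + 3 > 0" using pi_gt_zero
      by (simp_all add: mult_less_0_iff zero_less_mult_iff)
    then have "real_of_int m < 1" "real_of_int m > -1" by linarith+
    then have "m = 0" by linarith
    then have th: "\<theta> = 3*\<beta>" using m by simp
    have "polar_angle C = \<beta>"
      unfolding C using polar_rcis[of r \<beta>] kk by auto
    moreover have "polar_angle E = 2*\<beta>"
    proof -
      have e1: "(c + x)/2 = c * cos (2*\<beta>)" using u(1) mid(1)[OF c0] kk(8) by simp
      have e2: "(1 + y)/2 = c * sin (2*\<beta>)" using u(2) mid(2)[OF c0] kk(9) by simp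
      have "E = (c * cos (2*\<beta>), c * sin (2*\<beta>))"
        unfolding E e1 e2 ..
      then show ?thesis using polar_rcis[of c "2*\<beta>"] kk c0 by simp
    qed
    ultimately show "polar_angle C = \<theta> / 3 \<and> polar_angle E = 2 * \<theta> / 3" using th by simp
  qed
qed

end
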